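(* Let $\bm{Q}$ be the $m\times m$ transition rate matrix ($Q_{ij}\ge 0$ for $i\ne j$, $Q_{ii}=-\sum_{j\ne i}Q_{ij}$) of an irreducible, reversible continuous-time Markov chain with (elementwise positive) stationary distribution $\bm{\pi}_\infty$, so that $(\bm{\pi}_\infty)_iQ_{ij}=(\bm{\pi}_\infty)_jQ_{ji}$ for all $i,j$. For row vectors $\bm{p},\bm{q}\in\mathbb{R}^m$ define $\langle\bm{p},\bm{q}\rangle_{\bm{\pi}_\infty}=\sum_i (\bm{p})_i(\bm{q})_i/(\bm{\pi}_\infty)_i$, $\|\bm{p}\|^2_{\bm{\pi}_\infty}=\langle\bm{p},\bm{p}\rangle_{\bm{\pi}_\infty}$, and $\Phi^-(\bm{p})=-\tfrac12\langle\bm{p}\bm{Q},\bm{p}\rangle_{\bm{\pi}_\infty}$. Given $\bm{p}_{k-1}^{+}\in\Delta^{m-1}$ and a step size $\lambda>0$, let $$\bm{p}_k^{-}(\lambda)=\underset{\bm{p}\in\Delta^{m-1}}{\arg\inf}\;\tfrac12\|\bm{p}-\bm{p}_{k-1}^{+}\|^2_{\bm{\pi}_\infty}+\lambda\Phi^-(\bm{p}).$$ Then $\bm{p}_k^{-}(\lambda)$ is a $\lambda$-approximate prior: it coincides with the exact prior propagation $\bm{p}_{k-1}^{+}\exp(\lambda\bm{Q})$ (the solution at time $\lambda$ of $\dot{\bm{\pi}}^-=\bm{\pi}^-\bm{Q}$ started at $\bm{p}_{k-1}^+$) up to $o(\lambda)$ as $\lambda\downarrow0$.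
   Context: $\Delta^{m-1}=\{\bm{\pi}\in\mathbb{R}^m_{\ge 0}:\bm{\pi}\mathbf{1}=1\}$ is the probability simplex of row vectors ($\mathbf{1}$ the column vector of ones). In the filtering setting, $\bm{p}_{k-1}^+$ is the approximate posterior at time $(k-1)\lambda$ and $\bm{p}_k^-$ is the approximate prior at time $k\lambda$. *)

theory Defs
  imports "HOL-Analysis.Analysis"
begin

text \<open>Matrices are \<open>real^'n^'n\<close> (rows indexed first), row vectors are \<open>real^'n\<close>,
  and the row-vector/matrix product \<open>p Q\<close> is \<open>p v* Q\<close>.\<close>

fun mat_pow :: "real^'n^'n \<Rightarrow> nat \<Rightarrow> real^'n^'n" where
  "mat_pow A 0 = mat 1"
| "mat_pow A (Suc k) = mat_pow A k ** A"

definition mat_exp :: "real^'n^'n \<Rightarrow> real^'n^'n" where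
  "mat_exp A = (\<Sum>k. (1 / fact k) *\<^sub>R mat_pow A k)"

definition prob_simplex :: "(real^'n) set" where
  "prob_simplex = {p. (\<forall>i. 0 \<le> p $ i) \<and> (\<Sum>i\<in>UNIV. p $ i) = 1}"

definition rate_matrix :: "real^'n^'n \<Rightarrow> bool" where
  "rate_matrix Q \<longleftrightarrow> (\<forall>i j. i \<noteq> j \<longrightarrow> 0 \<le> Q $ i $ j) \<and>
     (\<forall>i. Q $ i $ i = - (\<Sum>j\<in>UNIV - {i}. Q $ i $ j))"

definition irreducible_chain :: "real^'n^'n \<Rightarrow> bool" where
  "irreducible_chain Q \<longleftrightarrow> (\<forall>i j. (i, j) \<in> {(a, b). a \<noteq> b \<and> 0 < Q $ a $ b}\<^sup>*)"

definition stationary_dist :: "real^'n^'n \<Rightarrow> real^'n \<Rightarrow> bool" where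
  "stationary_dist Q \<pi> \<longleftrightarrow> (\<forall>i. 0 < \<pi> $ i) \<and> (\<Sum>i\<in>UNIV. \<pi> $ i) = 1 \<and> \<pi> v* Q = 0"

definition reversible_wrt :: "real^'n^'n \<Rightarrow> real^'n \<Rightarrow> bool" where
  "reversible_wrt Q \<pi> \<longleftrightarrow> (\<forall>i j. \<pi> $ i * Q $ i $ j = \<pi> $ j * Q $ j $ i)"

definition pi_inner :: "real^'n \<Rightarrow> real^'n \<Rightarrow> real^'n \<Rightarrow> real" where
  "pi_inner \<pi> p q = (\<Sum>i\<in>UNIV. p $ i * q $ i / \<pi> $ i)"

definition pi_norm_sq :: "real^'n \<Rightarrow> real^'n \<Rightarrow> real" where
  "pi_norm_sq \<pi> p = pi_inner \<pi> p p"

definition Phi_minus :: "real^'n^'n \<Rightarrow> real^'n \<Rightarrow> real^'n \<Rightarrow> real" where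
  "Phi_minus Q \<pi> p = - (1/2) * pi_inner \<pi> (p v* Q) p"

definition prior_objective :: "real^'n^'n \<Rightarrow> real^'n \<Rightarrow> real^'n \<Rightarrow> real \<Rightarrow> real^'n \<Rightarrow> real" where
  "prior_objective Q \<pi> p0 lam p = (1/2) * pi_norm_sq \<pi> (p - p0) + lam * Phi_minus Q \<pi> p"

definition is_prior_minimizer ::
  "real^'n^'n \<Rightarrow> real^'n \<Rightarrow> real^'n \<Rightarrow> real \<Rightarrow> real^'n \<Rightarrow> bool" where
  "is_prior_minimizer Q \<pi> p0 lam p \<longleftrightarrow> p \<in> prob_simplex \<and>
     (\<forall>q\<in>prob_simplex. prior_objective Q \<pi> p0 lam p \<le> prior_objective Q \<pi> p0 lam q)"

end

theory Submission
  imports Defs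
begin

definition msum :: "real^'n^'m \<Rightarrow> real" where
  "msum M = (\<Sum>i\<in>UNIV. \<Sum>j\<in>UNIV. \<bar>M $ i $ j\<bar>)"

lemma msum_nonneg: "0 \<le> msum M"
  unfolding msum_def by (intro sum_nonneg) auto

lemma vm_norm: "norm (x v* (A::real^'n^'m)) \<le> msum A * norm x"
proof -
  have "x v* A = transpose A *v x" by simp
  also have "norm \<dots> \<le> onorm ((*v) (transpose A)) * norm x"
    by (intro onorm matrix_vector_mul_bounded_linear)
  also have "\<dots> \<le> msum A * norm x"
  proof (intro mult_right_mono)
    have "onorm ((*v) (transpose A)) \<le> (\<Sum>i\<in>UNIV. \<Sum>j\<in>UNIV. \<bar>transpose A $ i $ j\<bar>)"
      by (rule onorm_le_matrix_component_sum)
    also have "\<dots> = msum A" unfolding msum_def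
      by (simp add: transpose_def) (rule sum.swap)
    finally show "onorm ((*v) (transpose A)) \<le> msum A" .
  qed simp
  finally show ?thesis .
qed

lemma norm_le_msum: "norm (M::real^'n^'m) \<le> msum M"
proof -
  have "norm M \<le> (\<Sum>i\<in>UNIV. norm (M $ i))"
    by (simp add: norm_vec_def L2_set_le_sum)
  also have "\<dots> \<le> msum M" unfolding msum_def
    by (intro sum_mono norm_le_l1_cart)
  finally show ?thesis .
qed

lemma msum_mult: "msum ((A::real^'k^'n) ** (B::real^'m^'k)) \<le> msum A * msum B"
proof -
  have "msum (A ** B) \<le> (\<Sum>i\<in>UNIV. \<Sum>j\<in>UNIV. \<Sum>k\<in>UNIV. \<bar>A$i$k\<bar> * \<bar>B$k$j\<bar>)"
    unfolding msum_def matrix_matrix_mult_def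
    by (auto intro!: sum_mono simp: abs_mult[symmetric] intro: order_trans[OF sum_abs])
  also have "\<dots> = (\<Sum>i\<in>UNIV. \<Sum>k\<in>UNIV. \<Sum>j\<in>UNIV. \<bar>A$i$k\<bar> * \<bar>B$k$j\<bar>)"
    by (rule sum.cong[OF refl], rule sum.swap)
  also have "\<dots> = (\<Sum>i\<in>UNIV. \<Sum>k\<in>UNIV. \<bar>A$i$k\<bar> * (\<Sum>j\<in>UNIV. \<bar>B$k$j\<bar>))"
    by (simp add: sum_distrib_left)
  also have "\<dots> \<le> (\<Sum>i\<in>UNIV. \<Sum>k\<in>UNIV. \<bar>A$i$k\<bar> * msum B)"
    unfolding msum_def
    by (intro sum_mono mult_left_mono member_le_sum[of _ UNIV "\<lambda>k. \<Sum>j\<in>UNIV. \<bar>B$k$j\<bar>"]) 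
       (auto intro: sum_nonneg)
  also have "\<dots> = msum A * msum B"
    unfolding msum_def by (simp add: sum_distrib_right)
  finally show ?thesis .
qed

lemma msum_mat1: "msum (mat 1 :: real^'n^'n) = real CARD('n)"
proof -
  have "\<And>i::'n. (\<Sum>j\<in>UNIV. \<bar>(mat 1 :: real^'n^'n) $ i $ j\<bar>) = 1"
    by (simp add: mat_def if_distrib cong: if_cong)
  then show ?thesis unfolding msum_def by simp
qed

lemma msum_pow: "msum (mat_pow (A::real^'n^'n) k) \<le> real CARD('n) * msum A ^ k"
proof (induction k)
  case 0 then show ?case by (simp add: msum_mat1)
next
  case (Suc k)
  have "msum (mat_pow A (Suc k)) \<le> msum (mat_pow A k) * msum A"
    by (simp add: msum_mult)
  also have "\<dots> \<le> real CARD('n) * msum A ^ k * msum A"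
    by (intro mult_right_mono Suc msum_nonneg)
  finally show ?case by (simp add: mult_ac)
qed

lemma mat_pow_scale: "mat_pow (c *\<^sub>R A) k = (c ^ k) *\<^sub>R mat_pow (A::real^'n^'n) k"
  by (induction k) (simp_all add: matrix_scalar_ac scalar_matrix_assoc[symmetric])

lemma vm_scale: "x v* (c *\<^sub>R A) = c *\<^sub>R (x v* (A::real^'n^'m))"
  by (simp add: vector_matrix_mult_def vec_eq_iff sum_distrib_left mult_ac)

lemma vm_scale_left: "(c *\<^sub>R x) v* A = c *\<^sub>R (x v* (A::real^'n^'m))"
  by (simp add: vector_matrix_mult_def vec_eq_iff sum_distrib_left mult_ac)

lemma vm_pow_norm: "norm (x v* mat_pow (A::real^'n^'n) k) \<le> msum A ^ k * norm x"
proof (induction k)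
  case 0 then show ?case by simp
next
  case (Suc k)
  have "norm (x v* mat_pow A (Suc k)) = norm ((x v* mat_pow A k) v* A)"
    by (simp add: vector_matrix_mul_assoc)
  also have "\<dots> \<le> msum A * norm (x v* mat_pow A k)" by (rule vm_norm)
  also have "\<dots> \<le> msum A * (msum A ^ k * norm x)"
    by (intro mult_left_mono Suc msum_nonneg)
  finally show ?case by (simp add: mult_ac)
qed

lemma bl_vm: "bounded_linear (\<lambda>A::real^'n^'m. x v* A)"
proof -
  have "linear (\<lambda>A::real^'n^'m. x v* A)"
    by (intro linearI) (simp_all add: vector_matrix_mult_def vec_eq_iff sum.distrib
        sum_distrib_left algebra_simps)
  then show ?thesis using linear_conv_bounded_linear by blast
qed

lemma exp_series_sums:
  fixes Q :: "real^'n^'n"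
  shows "(\<lambda>k. (t ^ k / fact k) *\<^sub>R (x v* mat_pow Q k)) sums (x v* mat_exp (t *\<^sub>R Q))"
proof -
  let ?f = "\<lambda>k. (1 / fact k) *\<^sub>R mat_pow (t *\<^sub>R Q) k"
  have "summable ?f"
  proof (rule summable_comparison_test)
    show "\<exists>N. \<forall>n\<ge>N. norm (?f n) \<le> real CARD('n) * (inverse (fact n) * msum (t *\<^sub>R Q) ^ n)"
    proof (intro exI allI impI)
      fix n :: nat
      have "norm (?f n) = (1 / fact n) * norm (mat_pow (t *\<^sub>R Q) n)"
        by (simp only: norm_scaleR) simp
      also have "\<dots> \<le> (1 / fact n) * msum (mat_pow (t *\<^sub>R Q) n)"
        by (intro mult_left_mono norm_le_msum) simp
      also have "\<dots> \<le> (1 / fact n) * (real CARD('n) * msum (t *\<^sub>R Q) ^ n)"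
        by (intro mult_left_mono msum_pow) simp
      finally show "norm (?f n) \<le> real CARD('n) * (inverse (fact n) * msum (t *\<^sub>R Q) ^ n)"
        by (simp add: divide_inverse mult_ac)
    qed
    show "summable (\<lambda>n. real CARD('n) * (inverse (fact n) * msum (t *\<^sub>R Q) ^ n))"
      by (intro summable_mult summable_exp)
  qed
  then have "?f sums mat_exp (t *\<^sub>R Q)" unfolding mat_exp_def by (rule summable_sums)
  from bounded_linear.sums[OF bl_vm this, of x]
  moreover have "x v* ((1 / fact k) *\<^sub>R mat_pow (t *\<^sub>R Q) k) = (t ^ k / fact k) *\<^sub>R (x v* mat_pow Q k)" for k
    by (simp only: vm_scale mat_pow_scale scaleR_scaleR) simp
  ultimately show ?thesis by simp
qed

lemma exp_bound:
  fixes Q :: "real^'n^'n"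
  assumes t: "0 \<le> t" "t \<le> 1"
  shows "norm (x v* mat_exp (t *\<^sub>R Q) - x - t *\<^sub>R (x v* Q))
     \<le> t^2 * (msum Q ^ 2 * norm x * exp (msum Q))"
proof -
  let ?K = "msum Q"
  let ?a = "\<lambda>k. (t ^ k / fact k) *\<^sub>R (x v* mat_pow Q k)"
  have "(\<lambda>k. ?a (k + 2)) sums (x v* mat_exp (t *\<^sub>R Q) - (\<Sum>i<2. ?a i))"
    by (rule sums_split_initial_segment[OF exp_series_sums])
  moreover have "(\<Sum>i<2. ?a i) = x + t *\<^sub>R (x v* Q)"
    by (simp add: numeral_2_eq_2)
  ultimately have S: "(\<lambda>k. ?a (k + 2)) sums (x v* mat_exp (t *\<^sub>R Q) - x - t *\<^sub>R (x v* Q))"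
    by (simp only: diff_diff_eq)
  let ?b = "\<lambda>k. t^2 * (?K^2 * norm x) * ((t * ?K) ^ k /\<^sub>R fact k)"
  have bs: "?b sums (t^2 * (?K^2 * norm x) * exp (t * ?K))"
    by (intro sums_mult exp_converges)
  have le: "norm (?a (k + 2)) \<le> ?b k" for k
  proof -
    have "norm (?a (k+2)) = t^(k+2) / fact (k+2) * norm (x v* mat_pow Q (k+2))"
      using t by simp
    also have "\<dots> \<le> t^(k+2) / fact (k+2) * (?K^(k+2) * norm x)"
      by (intro mult_left_mono vm_pow_norm) (use t in simp)
    also have "\<dots> \<le> t^(k+2) / fact k * (?K^(k+2) * norm x)"
    proof (rule mult_right_mono)
      have "fact k \<le> (fact (k+2) :: real)" by (intro fact_mono) simp
      moreover have "0 \<le> t^(k+2)" using t by simp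
      ultimately show "t^(k+2) / fact (k+2) \<le> t^(k+2) / fact k"
        by (intro divide_left_mono) auto
      show "0 \<le> ?K^(k+2) * norm x" using msum_nonneg[of Q] by simp
    qed
    also have "\<dots> = ?b k"
      by (simp add: power_add power_mult_distrib divide_inverse mult_ac power2_eq_square)
    finally show ?thesis .
  qed
  have "norm (x v* mat_exp (t *\<^sub>R Q) - x - t *\<^sub>R (x v* Q)) = norm (suminf (\<lambda>k. ?a (k + 2)))"
    by (simp only: sums_unique[OF S])
  also have "\<dots> \<le> suminf ?b"
    by (rule norm_suminf_le[OF le sums_summable[OF bs]])
  also have "\<dots> = t^2 * (?K^2 * norm x) * exp (t * ?K)"
    by (rule sums_unique[OF bs, symmetric])
  also have "\<dots> \<le> t^2 * (?K^2 * norm x) * exp ?K"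
  proof (rule mult_left_mono)
    have "t * ?K \<le> ?K" using t msum_nonneg[of Q] by (intro mult_left_le_one_le)
    then show "exp (t * ?K) \<le> exp ?K" by simp
  qed simp
  finally show ?thesis by (simp only: mult.assoc)
qed

lemma pi_inner_add_left: "pi_inner \<pi> (a + b) c = pi_inner \<pi> a c + pi_inner \<pi> b c"
  unfolding pi_inner_def by (simp add: distrib_right add_divide_distrib sum.distrib)
lemma pi_inner_add_right: "pi_inner \<pi> a (b + c) = pi_inner \<pi> a b + pi_inner \<pi> a c"
  unfolding pi_inner_def by (simp add: distrib_left add_divide_distrib sum.distrib)
lemma pi_inner_diff_left: "pi_inner \<pi> (a - b) c = pi_inner \<pi> a c - pi_inner \<pi> b c"
  unfolding pi_inner_def by (simp add: left_diff_distrib diff_divide_distrib sum_subtractf)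
lemma pi_inner_diff_right: "pi_inner \<pi> a (b - c) = pi_inner \<pi> a b - pi_inner \<pi> a c"
  unfolding pi_inner_def by (simp add: right_diff_distrib diff_divide_distrib sum_subtractf)
lemma pi_inner_scale_left: "pi_inner \<pi> (r *\<^sub>R a) c = r * pi_inner \<pi> a c"
  unfolding pi_inner_def by (simp add: sum_distrib_left mult_ac)
lemma pi_inner_scale_right: "pi_inner \<pi> a (r *\<^sub>R c) = r * pi_inner \<pi> a c"
  unfolding pi_inner_def by (simp add: sum_distrib_left mult_ac)
lemma pi_inner_commute: "pi_inner \<pi> a b = pi_inner \<pi> b a"
  unfolding pi_inner_def by (simp add: mult_ac)

lemma pi_inner_sym:
  assumes rev: "reversible_wrt Q \<pi>" and pos: "\<And>i. 0 < \<pi> $ i"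
  shows "pi_inner \<pi> (x v* Q) y = pi_inner \<pi> (y v* Q) x"
proof -
  have key: "Q $ j $ i / \<pi> $ i = Q $ i $ j / \<pi> $ j" for i j
  proof -
    have "\<pi> $ j * Q $ j $ i = \<pi> $ i * Q $ i $ j" using rev unfolding reversible_wrt_def by metis
    then show ?thesis using pos[of i] pos[of j] by (simp add: field_simps)
  qed
  have "pi_inner \<pi> (x v* Q) y = (\<Sum>i\<in>UNIV. \<Sum>j\<in>UNIV. x $ j * y $ i * (Q $ j $ i / \<pi> $ i))"
    unfolding pi_inner_def vector_matrix_mult_def
    by (simp add: sum_distrib_left sum_distrib_right sum_divide_distrib mult_ac)
  also have "\<dots> = (\<Sum>i\<in>UNIV. \<Sum>j\<in>UNIV. x $ j * y $ i * (Q $ i $ j / \<pi> $ j))"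
    by (simp only: key)
  also have "\<dots> = (\<Sum>j\<in>UNIV. \<Sum>i\<in>UNIV. x $ j * y $ i * (Q $ i $ j / \<pi> $ j))"
    by (rule sum.swap)
  also have "\<dots> = pi_inner \<pi> (y v* Q) x"
    unfolding pi_inner_def vector_matrix_mult_def
    by (simp add: sum_distrib_left sum_distrib_right sum_divide_distrib mult_ac)
  finally show ?thesis .
qed

lemma objective_expand:
  fixes Q :: "real^'n^'n" and p0 d \<pi> :: "real^'n" and t :: real
  assumes rev: "reversible_wrt Q \<pi>" and pos: "\<And>i. 0 < \<pi> $ i"
  defines "w \<equiv> p0 v* Q"
  defines "g \<equiv> w v* Q"
  defines "q \<equiv> p0 + t *\<^sub>R w"
  shows "prior_objective Q \<pi> p0 t (q + d) - prior_objective Q \<pi> p0 t q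
    = (1/2) * pi_inner \<pi> d d - t^2 * pi_inner \<pi> g d - (t/2) * pi_inner \<pi> (d v* Q) d"
proof -
  have s1: "pi_inner \<pi> (d v* Q) p0 = pi_inner \<pi> w d"
    unfolding w_def by (rule pi_inner_sym[OF rev pos])
  have s2: "pi_inner \<pi> (d v* Q) w = pi_inner \<pi> g d"
    unfolding g_def by (rule pi_inner_sym[OF rev pos])
  have e1: "q + d - p0 = t *\<^sub>R w + d" unfolding q_def by simp
  have e2: "q - p0 = t *\<^sub>R w" unfolding q_def by simp
  have e3: "(q + d) v* Q = w + t *\<^sub>R g + d v* Q"
    unfolding q_def g_def w_def by (simp add: vector_matrix_left_distrib vm_scale_left vector_matrix_mul_assoc)
  have e4: "q v* Q = w + t *\<^sub>R g"
    unfolding q_def g_def w_def by (simp add: vector_matrix_left_distrib vm_scale_left vector_matrix_mul_assoc)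
  show ?thesis
    unfolding prior_objective_def Phi_minus_def pi_norm_sq_def e1 e2 e3 e4
    unfolding q_def
    by (simp add: pi_inner_add_left pi_inner_add_right pi_inner_scale_left
        pi_inner_scale_right s1 s2 pi_inner_commute[of \<pi> d w] pi_inner_commute[of \<pi> d g]
        algebra_simps power2_eq_square)
qed

lemma pi_le1:
  assumes "stationary_dist Q \<pi>"
  shows "\<pi> $ i \<le> 1" "0 < \<pi> $ i"
proof -
  show pos: "0 < \<pi> $ i" using assms unfolding stationary_dist_def by auto
  have "\<pi> $ i \<le> (\<Sum>j\<in>UNIV. \<pi> $ j)"
    by (rule member_le_sum) (use assms in \<open>auto simp: stationary_dist_def less_imp_le\<close>)
  then show "\<pi> $ i \<le> 1" using assms unfolding stationary_dist_def by simp
qed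

lemma pi_inner_self_ge:
  assumes "\<And>i. 0 < \<pi> $ i" "\<And>i. \<pi> $ i \<le> 1"
  shows "(norm d)^2 \<le> pi_inner \<pi> d d"
proof -
  have "(norm d)^2 = (\<Sum>i\<in>UNIV. d $ i * d $ i)"
    by (simp add: power2_norm_eq_inner inner_vec_def)
  also have "\<dots> \<le> pi_inner \<pi> d d" unfolding pi_inner_def
  proof (rule sum_mono)
    fix i
    have "d $ i * d $ i * \<pi> $ i \<le> d $ i * d $ i * 1"
      by (intro mult_left_mono assms) simp
    then show "d $ i * d $ i \<le> d $ i * d $ i / \<pi> $ i"
      using assms(1)[of i] by (simp add: le_divide_eq)
  qed
  finally show ?thesis .
qed

lemma pi_inner_bound:
  assumes "\<And>i. 0 < \<pi> $ i"
  shows "\<bar>pi_inner \<pi> g d\<bar> \<le> (\<Sum>i\<in>UNIV. \<bar>g $ i\<bar> / \<pi> $ i) * norm d"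
proof -
  have "\<bar>pi_inner \<pi> g d\<bar> \<le> (\<Sum>i\<in>UNIV. \<bar>g $ i * d $ i / \<pi> $ i\<bar>)"
    unfolding pi_inner_def by (rule sum_abs)
  also have "\<dots> \<le> (\<Sum>i\<in>UNIV. \<bar>g $ i\<bar> / \<pi> $ i * norm d)"
  proof (rule sum_mono)
    fix i
    have "\<bar>g $ i * d $ i / \<pi> $ i\<bar> = \<bar>g $ i\<bar> / \<pi> $ i * \<bar>d $ i\<bar>"
      using assms[of i] by (simp add: abs_mult)
    also have "\<dots> \<le> \<bar>g $ i\<bar> / \<pi> $ i * norm d"
      by (intro mult_left_mono component_le_norm_cart) (use assms[of i] in simp)
    finally show "\<bar>g $ i * d $ i / \<pi> $ i\<bar> \<le> \<bar>g $ i\<bar> / \<pi> $ i * norm d" .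
  qed
  also have "\<dots> = (\<Sum>i\<in>UNIV. \<bar>g $ i\<bar> / \<pi> $ i) * norm d"
    by (simp add: sum_distrib_right)
  finally show ?thesis .
qed

lemma pi_inner_Q_bound:
  assumes "\<And>i. 0 < \<pi> $ i"
  shows "\<bar>pi_inner \<pi> (d v* Q) d\<bar> \<le> msum Q * (\<Sum>i\<in>UNIV. 1 / \<pi> $ i) * (norm d)^2"
proof -
  have "\<bar>pi_inner \<pi> (d v* Q) d\<bar> \<le> (\<Sum>i\<in>UNIV. \<bar>(d v* Q) $ i\<bar> / \<pi> $ i) * norm d"
    by (rule pi_inner_bound[OF assms])
  also have "\<dots> \<le> (\<Sum>i\<in>UNIV. (msum Q * norm d) * (1 / \<pi> $ i)) * norm d"
  proof (intro mult_right_mono sum_mono)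
    fix i
    have "\<bar>(d v* Q) $ i\<bar> \<le> msum Q * norm d"
      using component_le_norm_cart[of "d v* Q" i] vm_norm[of d Q] by linarith
    then show "\<bar>(d v* Q) $ i\<bar> / \<pi> $ i \<le> (msum Q * norm d) * (1 / \<pi> $ i)"
      using assms[of i] by (simp add: divide_right_mono)
  qed simp
  also have "\<dots> = ((msum Q * norm d) * (\<Sum>i\<in>UNIV. 1 / \<pi> $ i)) * norm d"
    by (simp only: sum_distrib_left)
  also have "\<dots> = msum Q * (\<Sum>i\<in>UNIV. 1 / \<pi> $ i) * (norm d)^2"
    by (simp add: power2_eq_square mult_ac)
  finally show ?thesis .
qed

lemma row_sum_zero:
  assumes "rate_matrix Q"
  shows "(\<Sum>i\<in>UNIV. Q $ j $ i) = 0"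
proof -
  have "(\<Sum>i\<in>UNIV. Q $ j $ i) = Q $ j $ j + (\<Sum>i\<in>UNIV - {j}. Q $ j $ i)"
    by (rule sum.remove) auto
  then show ?thesis using assms unfolding rate_matrix_def by simp
qed

lemma diag_bound: "\<bar>Q $ i $ j\<bar> \<le> msum Q"
proof -
  have "\<bar>Q $ i $ j\<bar> \<le> (\<Sum>j\<in>UNIV. \<bar>Q $ i $ j\<bar>)"
    by (rule member_le_sum) auto
  also have "\<dots> \<le> msum Q" unfolding msum_def
    by (rule member_le_sum[of _ UNIV "\<lambda>i. \<Sum>j\<in>UNIV. \<bar>Q $ i $ j\<bar>"]) (auto intro: sum_nonneg)
  finally show ?thesis .
qed

lemma euler_in_simplex:
  assumes rm: "rate_matrix Q" and p0: "p0 \<in> prob_simplex"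
    and t: "0 \<le> t" "t * msum Q \<le> 1"
  shows "p0 + t *\<^sub>R (p0 v* Q) \<in> prob_simplex"
proof -
  have p0nn: "\<And>i. 0 \<le> p0 $ i" and p0s: "(\<Sum>i\<in>UNIV. p0 $ i) = 1"
    using p0 unfolding prob_simplex_def by auto
  have nn: "0 \<le> (p0 + t *\<^sub>R (p0 v* Q)) $ i" for i
  proof -
    have "(p0 v* Q) $ i = p0 $ i * Q $ i $ i + (\<Sum>j\<in>UNIV - {i}. p0 $ j * Q $ j $ i)"
      unfolding vector_matrix_mult_def by (simp add: sum.remove)
    moreover have "0 \<le> (\<Sum>j\<in>UNIV - {i}. p0 $ j * Q $ j $ i)"
      using rm p0nn unfolding rate_matrix_def by (intro sum_nonneg) auto
    moreover have "0 \<le> p0 $ i * (1 + t * Q $ i $ i)"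
    proof (intro mult_nonneg_nonneg p0nn)
      have "- msum Q \<le> Q $ i $ i" using diag_bound[of Q i i] by linarith
      then have "t * (- msum Q) \<le> t * Q $ i $ i" using t by (intro mult_left_mono) auto
      then show "0 \<le> 1 + t * Q $ i $ i" using t by linarith
    qed
    ultimately show ?thesis using t
      by (simp add: algebra_simps) (smt (verit) mult_nonneg_nonneg)
  qed
  have "(\<Sum>i\<in>UNIV. (p0 v* Q) $ i) = (\<Sum>j\<in>UNIV. p0 $ j * (\<Sum>i\<in>UNIV. Q $ j $ i))"
    unfolding vector_matrix_mult_def by (simp add: sum_distrib_left) (rule sum.swap)
  also have "\<dots> = 0" using row_sum_zero[OF rm] by simp
  finally have "(\<Sum>i\<in>UNIV. (p0 + t *\<^sub>R (p0 v* Q)) $ i) = 1"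
    using p0s by (simp add: sum.distrib sum_distrib_left[symmetric])
  then show ?thesis using nn unfolding prob_simplex_def by auto
qed

theorem theorem3:
  fixes Q :: "real^'n^'n" and \<pi>inf p0 :: "real^'n" and P :: "real \<Rightarrow> real^'n"
  assumes "rate_matrix Q"
    and "irreducible_chain Q"
    and "stationary_dist Q \<pi>inf"
    and "reversible_wrt Q \<pi>inf"
    and "p0 \<in> prob_simplex"
    and "\<And>t. 0 < t \<Longrightarrow> is_prior_minimizer Q \<pi>inf p0 t (P t)"
  shows "((\<lambda>t. norm (P t - p0 v* mat_exp (t *\<^sub>R Q)) / t) \<longlongrightarrow> 0) (at_right 0)"
proof -
  note rm = assms(1) and st = assms(3) and rev = assms(4) and p0 = assms(5) and mini = assms(6)
  have pos: "\<And>i. 0 < \<pi>inf $ i" and le1: "\<And>i. \<pi>inf $ i \<le> 1"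
    using pi_le1[OF st] by auto
  define K where "K = msum Q"
  define R where "R = (\<Sum>i\<in>UNIV. 1 / \<pi>inf $ i)"
  define w where "w = p0 v* Q"
  define g where "g = w v* Q"
  define G where "G = (\<Sum>i\<in>UNIV. \<bar>g $ i\<bar> / \<pi>inf $ i)"
  define C where "C = 4 * G + K^2 * norm p0 * exp K"
  define b where "b = min 1 (min (1 / (K + 1)) (1 / (2 * K * R + 1)))"
  have K0: "0 \<le> K" unfolding K_def by (rule msum_nonneg)
  have R0: "0 \<le> R" unfolding R_def using pos by (intro sum_nonneg) (simp add: less_imp_le)
  have G0: "0 \<le> G" unfolding G_def using pos by (intro sum_nonneg) (simp add: less_imp_le)
  have "0 \<le> 2 * K * R" using K0 R0 by simp
  then have b0: "0 < b" unfolding b_def using K0 by auto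
  have bound: "norm (P t - p0 v* mat_exp (t *\<^sub>R Q)) / t \<le> t * C" if t: "0 < t" "t < b" for t
  proof -
    have t1: "t \<le> 1" using t unfolding b_def by auto
    have "t < 1 / (K + 1)" using t unfolding b_def by auto
    then have "t * (K + 1) < 1" using K0 by (simp add: less_divide_eq)
    then have tK: "t * K \<le> 1" using t by (simp add: algebra_simps)
    have "t < 1 / (2 * K * R + 1)" using t unfolding b_def by auto
    then have "t * (2 * K * R + 1) < 1" using K0 R0
      by (simp add: less_divide_eq add_nonneg_pos)
    then have tKR: "t * (K * R) \<le> 1/2" using t by (simp add: algebra_simps)
    define q where "q = p0 + t *\<^sub>R w"
    define d where "d = P t - q"
    define n where "n = norm d"
    have qS: "q \<in> prob_simplex"
      unfolding q_def w_def using euler_in_simplex[OF rm p0, of t] t tK unfolding K_def by simp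
    have "prior_objective Q \<pi>inf p0 t (P t) \<le> prior_objective Q \<pi>inf p0 t q"
      using mini[OF t(1)] qS unfolding is_prior_minimizer_def by blast
    moreover have "P t = q + d" unfolding d_def by simp
    ultimately have "prior_objective Q \<pi>inf p0 t (q + d) - prior_objective Q \<pi>inf p0 t q \<le> 0"
      by simp
    then have ineq: "(1/2) * pi_inner \<pi>inf d d \<le> t^2 * pi_inner \<pi>inf g d + (t/2) * pi_inner \<pi>inf (d v* Q) d"
      unfolding q_def w_def g_def objective_expand[OF rev pos] by simp
    have a1: "n^2 \<le> pi_inner \<pi>inf d d" unfolding n_def by (rule pi_inner_self_ge[OF pos le1])
    have a2: "t^2 * pi_inner \<pi>inf g d \<le> t^2 * (G * n)"
    proof (rule mult_left_mono)
      show "pi_inner \<pi>inf g d \<le> G * n"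
        using pi_inner_bound[OF pos, of g d] unfolding G_def n_def by linarith
    qed simp
    have a3: "(t/2) * pi_inner \<pi>inf (d v* Q) d \<le> (t/2) * (K * R * n^2)"
    proof (rule mult_left_mono)
      show "pi_inner \<pi>inf (d v* Q) d \<le> K * R * n^2"
        using pi_inner_Q_bound[OF pos, of d Q] unfolding K_def R_def n_def by linarith
    qed (use t in simp)
    have a4: "(t/2) * (K * R * n^2) \<le> (1/4) * n^2"
    proof -
      have "(t/2) * (K * R * n^2) = (t * (K * R)) * (n^2 / 2)" by (simp add: field_simps)
      also have "\<dots> \<le> (1/2) * (n^2 / 2)" by (rule mult_right_mono[OF tKR]) simp
      finally show ?thesis by simp
    qed
    have "(1/2) * n^2 \<le> t^2 * (G * n) + (1/4) * n^2"
      using ineq a1 a2 a3 a4 by linarith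
    then have "n^2 \<le> 4 * (t^2 * (G * n))" by linarith
    then have "n * n \<le> (4 * t^2 * G) * n" by (simp add: power2_eq_square mult_ac)
    then have nb: "n \<le> 4 * t^2 * G"
    proof (cases "n = 0")
      case True then show ?thesis using G0 by simp
    next
      case False
      then have "0 < n" unfolding n_def by simp
      with \<open>n * n \<le> (4 * t^2 * G) * n\<close> show ?thesis by simp
    qed
    have eb: "norm (p0 v* mat_exp (t *\<^sub>R Q) - p0 - t *\<^sub>R (p0 v* Q)) \<le> t^2 * (K^2 * norm p0 * exp K)"
      unfolding K_def using exp_bound[of t p0 Q] t t1 by simp
    have eqd: "P t - p0 v* mat_exp (t *\<^sub>R Q) = d - (p0 v* mat_exp (t *\<^sub>R Q) - p0 - t *\<^sub>R (p0 v* Q))"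
      unfolding d_def q_def w_def by simp
    have "norm (P t - p0 v* mat_exp (t *\<^sub>R Q)) \<le> n + norm (p0 v* mat_exp (t *\<^sub>R Q) - p0 - t *\<^sub>R (p0 v* Q))"
      unfolding n_def eqd by (rule norm_triangle_ineq4)
    also have "\<dots> \<le> 4 * t^2 * G + t^2 * (K^2 * norm p0 * exp K)"
      using nb eb by linarith
    also have "\<dots> = t * (t * C)" unfolding C_def by (simp add: power2_eq_square algebra_simps)
    finally have "norm (P t - p0 v* mat_exp (t *\<^sub>R Q)) \<le> t * (t * C)" .
    then show ?thesis using t by (simp add: divide_le_eq mult_ac)
  qed
  show ?thesis
  proof (rule tendsto_sandwich[where f = "\<lambda>_. 0" and h = "\<lambda>t. t * C"])
    show "\<forall>\<^sub>F t in at_right 0. 0 \<le> norm (P t - p0 v* mat_exp (t *\<^sub>R Q)) / t"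
      unfolding eventually_at_right_field by (intro exI[of _ 1]) auto
    show "\<forall>\<^sub>F t in at_right 0. norm (P t - p0 v* mat_exp (t *\<^sub>R Q)) / t \<le> t * C"
      unfolding eventually_at_right_field using bound b0 by blast
    show "((\<lambda>_. 0) \<longlongrightarrow> (0::real)) (at_right 0)" by simp
    have "((\<lambda>t. t * C) \<longlongrightarrow> 0 * C) (at_right (0::real))"
      by (intro tendsto_intros)
    then show "((\<lambda>t. t * C) \<longlongrightarrow> 0) (at_right (0::real))" by simp
  qed
qed

end
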